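(* Let $A$ be a linearly closed proper subset of the abstract linear space $LS^3$. Then $A$ can be topologically embedded in $\mathbb{C}$, i.e. there is a continuous injective map $f:A\to\mathbb{C}$.
   Context: $\mathbb{S}^3$ is the unit sphere of $\mathbb{C}^2$. The abstract linear space $LS^3$ has point set $\mathbb{S}^3$ and abstract lines the sets $L\cap\mathbb{S}^3$ where $L$ is a complex affine line of $\mathbb{C}^2$ meeting $\mathbb{S}^3$ in more than one point; any two distinct points of $\mathbb{S}^3$ lie on exactly one abstract line. A subset $A\subset\mathbb{S}^3$ is linearly closed if for any two distinct $x,y\in A$ the abstract line through $x$ and $y$ is contained in $A$. Proper means $A\neq\mathbb{S}^3$. *)

theory Defs
  imports "HOL-Analysis.Analysis"
begin

text \<open>C^2 is modelled as complex \<times> complex (with its product = Euclidean topology).\<close>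

definition S3 :: "(complex \<times> complex) set" where
  "S3 = {p. (cmod (fst p))\<^sup>2 + (cmod (snd p))\<^sup>2 = 1}"

definition complex_affine_line :: "(complex \<times> complex) set \<Rightarrow> bool" where
  "complex_affine_line L \<longleftrightarrow>
     (\<exists>p v. v \<noteq> 0 \<and> L = {(fst p + t * fst v, snd p + t * snd v) | t. True})"

text \<open>Abstract lines of LS^3: L \<inter> S3 with L a complex affine line meeting S3 in more than one point.\<close>
definition abstract_lines :: "(complex \<times> complex) set set" where
  "abstract_lines = {L \<inter> S3 | L. complex_affine_line L \<and>
       (\<exists>x y. x \<noteq> y \<and> x \<in> L \<inter> S3 \<and> y \<in> L \<inter> S3)}"

definition linearly_closed :: "(complex \<times> complex) set \<Rightarrow> bool" where
  "linearly_closed A \<longleftrightarrow> A \<subseteq> S3 \<and>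
     (\<forall>x\<in>A. \<forall>y\<in>A. x \<noteq> y \<longrightarrow> (\<forall>l\<in>abstract_lines. x \<in> l \<and> y \<in> l \<longrightarrow> l \<subseteq> A))"

end

theory Submission
  imports Defs
begin

lemma S3_cnj: "p \<in> S3 \<Longrightarrow> fst p * cnj (fst p) + snd p * cnj (snd p) = 1"
proof -
  assume "p \<in> S3"
  then have "(cmod (fst p))\<^sup>2 + (cmod (snd p))\<^sup>2 = 1" by (simp add: S3_def)
  then have "complex_of_real ((cmod (fst p))\<^sup>2 + (cmod (snd p))\<^sup>2) = 1" by simp
  then show ?thesis by (simp only: of_real_add complex_norm_square)
qed

lemma denom_nz:
  assumes x: "x \<in> S3" and q: "q \<in> S3" and ne: "x \<noteq> q"
  shows "fst x * cnj (fst q) + snd x * cnj (snd q) - 1 \<noteq> 0"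
proof
  assume h: "fst x * cnj (fst q) + snd x * cnj (snd q) - 1 = 0"
  obtain x1 x2 where xe: "x = (x1, x2)" by (cases x)
  obtain a b where qe: "q = (a, b)" by (cases q)
  have hx: "x1 * cnj x1 + x2 * cnj x2 = 1" using S3_cnj[OF x] xe by simp
  have hq: "a * cnj a + b * cnj b = 1" using S3_cnj[OF q] qe by simp
  have h1: "x1 * cnj a + x2 * cnj b = 1" using h xe qe by simp
  have h2: "cnj x1 * a + cnj x2 * b = 1"
  proof -
    have "cnj (x1 * cnj a + x2 * cnj b) = 1" using h1 by simp
    then show ?thesis by (simp add: mult.commute)
  qed
  have "(x1 - a) * cnj (x1 - a) + (x2 - b) * cnj (x2 - b)
      = (x1 * cnj x1 + x2 * cnj x2) + (a * cnj a + b * cnj b)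
        - (x1 * cnj a + x2 * cnj b) - (cnj x1 * a + cnj x2 * b)"
    by (simp add: algebra_simps)
  also have "\<dots> = 0" using hx hq h1 h2 by simp
  finally have "complex_of_real ((cmod (x1 - a))\<^sup>2 + (cmod (x2 - b))\<^sup>2) = 0"
    by (simp only: of_real_add complex_norm_square)
  then have "(cmod (x1 - a))\<^sup>2 + (cmod (x2 - b))\<^sup>2 = 0" by (simp only: of_real_eq_0_iff)
  then have "cmod (x1 - a) = 0" "cmod (x2 - b) = 0"
    by (smt (verit) zero_le_power2 power_eq_0_iff norm_ge_zero)+
  then have "x = q" using xe qe by simp
  then show False using ne by simp
qed

lemma decomp:
  assumes "a * cnj a + b * cnj b = 1"
  shows "y1 - a = (y1 * cnj a + y2 * cnj b - 1) * a - (- b * y1 + a * y2) * cnj b"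
    and "y2 - b = (y1 * cnj a + y2 * cnj b - 1) * b + (- b * y1 + a * y2) * cnj a"
proof -
  have "(y1 * cnj a + y2 * cnj b - 1) * a - (- b * y1 + a * y2) * cnj b
       = y1 * (a * cnj a + b * cnj b) - a" by (simp add: algebra_simps)
  then show "y1 - a = (y1 * cnj a + y2 * cnj b - 1) * a - (- b * y1 + a * y2) * cnj b"
    using assms by simp
  have "(y1 * cnj a + y2 * cnj b - 1) * b + (- b * y1 + a * y2) * cnj a
       = y2 * (a * cnj a + b * cnj b) - b" by (simp add: algebra_simps)
  then show "y2 - b = (y1 * cnj a + y2 * cnj b - 1) * b + (- b * y1 + a * y2) * cnj a"
    using assms by simp
qed

theorem lemma3p4:
  fixes A :: "(complex \<times> complex) set"
  assumes "linearly_closed A"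
    and "A \<noteq> S3"
  shows "\<exists>f :: complex \<times> complex \<Rightarrow> complex. continuous_on A f \<and> inj_on f A"
proof -
  have AS: "A \<subseteq> S3" using assms(1) by (simp add: linearly_closed_def)
  then obtain q where qS: "q \<in> S3" and qA: "q \<notin> A" using assms(2) by blast
  obtain a b where qe: "q = (a, b)" by (cases q)
  have hq: "a * cnj a + b * cnj b = 1" using S3_cnj[OF qS] qe by simp
  define D where "D = (\<lambda>p::complex\<times>complex. fst p * cnj a + snd p * cnj b - 1)"
  define N where "N = (\<lambda>p::complex\<times>complex. - b * fst p + a * snd p)"
  have Dnz: "D p \<noteq> 0" if "p \<in> A" for p
  proof -
    have "p \<noteq> q" using that qA by auto
    then show ?thesis using denom_nz[OF _ qS, of p] that AS qe by (auto simp: D_def)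
  qed
  have cont: "continuous_on A (\<lambda>p. N p / D p)"
    unfolding N_def
    apply (rule continuous_intros)+
    using Dnz unfolding D_def by (auto intro!: continuous_intros)
  have inj: "inj_on (\<lambda>p. N p / D p) A"
  proof (rule inj_onI, rule ccontr)
    fix x y assume xA: "x \<in> A" and yA: "y \<in> A" and eq: "N x / D x = N y / D y" and ne: "x \<noteq> y"
    have dx: "D x \<noteq> 0" and dy: "D y \<noteq> 0" using Dnz xA yA by auto
    have cross: "N x * D y = N y * D x" using eq dx dy by (simp add: field_simps)
    define s where "s = D y / D x"
    have e1: "fst y - a = s * (fst x - a)"
    proof -
      have "fst y - a = D y * a - N y * cnj b" using decomp(1)[OF hq] by (simp add: D_def N_def)
      also have "\<dots> = s * (D x * a - N x * cnj b)"
        using cross dx by (simp add: s_def field_simps)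
      also have "D x * a - N x * cnj b = fst x - a"
        using decomp(1)[OF hq] by (simp add: D_def N_def)
      finally show ?thesis .
    qed
    have e2: "snd y - b = s * (snd x - b)"
    proof -
      have "snd y - b = D y * b + N y * cnj a" using decomp(2)[OF hq] by (simp add: D_def N_def)
      also have "\<dots> = s * (D x * b + N x * cnj a)"
        using cross dx by (simp add: s_def field_simps)
      also have "D x * b + N x * cnj a = snd x - b"
        using decomp(2)[OF hq] by (simp add: D_def N_def)
      finally show ?thesis .
    qed
    define v where "v = x - q"
    define L where "L = {(fst q + t * fst v, snd q + t * snd v) | t. True}"
    have vnz: "v \<noteq> 0" using xA qA by (auto simp: v_def)
    have lineL: "complex_affine_line L" unfolding complex_affine_line_def L_def using vnz by blast
    have xL: "x \<in> L" unfolding L_def v_def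
      by (rule CollectI, rule exI[of _ 1]) (simp add: prod_eq_iff)
    have yL: "y \<in> L" unfolding L_def v_def qe using e1 e2
      by (intro CollectI exI[of _ s]) (auto simp: prod_eq_iff algebra_simps)
    have qL: "q \<in> L" unfolding L_def
      by (rule CollectI, rule exI[of _ 0]) (simp add: prod_eq_iff)
    have xS: "x \<in> S3" and yS: "y \<in> S3" using xA yA AS by auto
    have "L \<inter> S3 \<in> abstract_lines"
      unfolding abstract_lines_def using lineL xL yL xS yS ne by blast
    then have "L \<inter> S3 \<subseteq> A" using assms(1) xA yA ne xL yL xS yS
      unfolding linearly_closed_def by blast
    then show False using qL qS qA by blast
  qed
  show ?thesis using cont inj by blast
qed

end
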